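(* Let $V=(\mathbb F_2)^n$ with $n=bs$, decomposed into bricks $V=V_1\oplus\cdots\oplus V_b$, $\dim V_j=s$. Let $r\ge2$ and $\rho_1,\dots,\rho_r\in\mathrm{Sym}(V)$, and let $\Phi$ be the $r$-round Feistel network whose $i$-th round applies the Feistel operator $\bar\rho_i$. Assume that for every $1\le i\le r$, $0\rho_i=0$ and $\rho_i=\gamma_i\lambda_i$, where \begin{enumerate} \item[a)] $\gamma_i$ is a parallel map whose S-boxes are $2^\delta$-differentially uniform and strongly $(\delta-1)$-anti-invariant, for some $\delta<s$; \item[b)] $\lambda_i$ is a linear strongly proper diffusion layer. \end{enumerate} Suppose there exists a sequence of $r+1$ non-trivial linear partitions $\mathcal L(\mathcal U_1),\dots,\mathcal L(\mathcal U_{r+1})$ of $V\times V$, where each $\mathcal U_i$ is a proper non-trivial subgroup of $V\times V$ and $\mathcal L(\mathcal U_i)\bar\rho_i=\mathcal L(\mathcal U_{i+1})$ for all $1\le i\le r$. For each $i$ let $A_i=\{a\in V\mid (a,c)\in\mathcal U_i\text{ for some }c\in V\}$ and $D_i=\{d\in V\mid (0,d)\in\mathcal U_i\}$. Then none of the following conditions holds: \begin{enumerate} \item there exists $1\le i\le r-1$ such that $\mathcal L(\mathcal U_{i+1})\bar\rho_{i+1}=\mathcal L(\mathcal U_i)$; \item there exists $1\le i\le r-1$ such that $\mathcal U_i=A_i\times D_i$, $\mathcal U_{i+1}=A_{i+1}\times D_{i+1}$ and $\mathcal U_{i+2}=A_{i+2}\times D_{i+2}$; \item there exists $1\le i\le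 r$ such that $D_i=\{0\}$ and $D_{i+1}=\{0\}$; \item there exists $1\le i\le r$ such that $A_i=\{0\}$ and $A_{i+1}=\{0\}$. \end{enumerate}
   Context: Maps act on the right and are composed left to right ($\gamma\lambda$ means first $\gamma$, then $\lambda$); $+$ is bitwise XOR. The Feistel operator induced by $\rho\in\mathrm{Sym}(V)$ is $\bar\rho:V\times V\to V\times V$, $(x_1,x_2)\bar\rho=(x_2,\ x_1+x_2\rho)$. A wall is a subspace $\bigoplus_{j\in I}V_j$ with $\emptyset\ne I\subsetneq\{1,\dots,b\}$. A parallel map is $\gamma\in\mathrm{Sym}(V)$ acting brickwise, $\gamma=(\gamma^{(1)},\dots,\gamma^{(b)})$ with $\gamma^{(j)}\in\mathrm{Sym}(V_j)$ (its S-boxes, viewed as permutations of $(\mathbb F_2)^s$). A linear $\lambda\in\mathrm{GL}(V)$ is a strongly proper diffusion layer if there are no walls $W,W'$ with $W\lambda=W'$. For $f\in\mathrm{Sym}((\mathbb F_2)^s)$ and $a,c\in(\mathbb F_2)^s$ let $\delta_f(a,c)=|\{x\mid xf+(x+a)f=c\}|$; $f$ is $d$-differentially uniform if $d=\max_{a\ne0,\,c}\delta_f(a,c)$. For $1\le\epsilon<s$, $f$ with $0f=0$ is strongly $\epsilon$-anti-invariant if for all proper non-trivial subspaces $U,W$ of $(\mathbb F_2)^s$, $Uf=W$ implies $\dim U=\dim W<s-\epsilon$. For a subgroup $\mathcal U$ of $V\times V$, $\mathcal L(\mathcal U)=\{\mathcal U+v\mid v\in V\times V\}$ (non-trivial if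 neither the partition into singletons nor $\{V\times V\}$), and $\mathcal A f=\{Af\mid A\in\mathcal A\}$ for a partition $\mathcal A$. *)

theory Defs
  imports Main
begin

text \<open>Vectors of (F_2)^m are modelled as functions nat => bool with support in {0..<m};
  addition is pointwise XOR. Maps act on the right: "first gamma, then lambda" is
  the function x |-> lambda (gamma x).\<close>

type_synonym vec = "nat \<Rightarrow> bool"

definition vecs :: "nat \<Rightarrow> vec set" where
  "vecs m = {x. \<forall>k. m \<le> k \<longrightarrow> \<not> x k}"

definition vzero :: vec where "vzero = (\<lambda>_. False)"

definition vadd :: "vec \<Rightarrow> vec \<Rightarrow> vec" (infixl "\<oplus>" 65) where
  "x \<oplus> y = (\<lambda>k. x k \<noteq> y k)"

definition padd :: "vec \<times> vec \<Rightarrow> vec \<times> vec \<Rightarrow> vec \<times> vec" where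
  "padd u v = (fst u \<oplus> fst v, snd u \<oplus> snd v)"

definition subspace2 :: "nat \<Rightarrow> vec set \<Rightarrow> bool" where
  "subspace2 m U \<longleftrightarrow> U \<subseteq> vecs m \<and> vzero \<in> U \<and> (\<forall>x\<in>U. \<forall>y\<in>U. x \<oplus> y \<in> U)"

definition dim2 :: "vec set \<Rightarrow> nat" where
  "dim2 U = (THE k. card U = 2 ^ k)"

definition proper_nontrivial_subspace :: "nat \<Rightarrow> vec set \<Rightarrow> bool" where
  "proper_nontrivial_subspace m U \<longleftrightarrow> subspace2 m U \<and> U \<noteq> {vzero} \<and> U \<noteq> vecs m"

text \<open>Bricks: V = V_0 + ... + V_(b-1), brick j consisting of coordinates j*s ..< (j+1)*s.\<close>
definition block :: "nat \<Rightarrow> nat \<Rightarrow> vec \<Rightarrow> vec" where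
  "block s j x = (\<lambda>k. if k < s then x (j * s + k) else False)"

definition wall :: "nat \<Rightarrow> nat \<Rightarrow> nat set \<Rightarrow> vec set" where
  "wall b s I = {x \<in> vecs (b * s). \<forall>j<b. j \<notin> I \<longrightarrow> block s j x = vzero}"

definition is_wall :: "nat \<Rightarrow> nat \<Rightarrow> vec set \<Rightarrow> bool" where
  "is_wall b s W \<longleftrightarrow> (\<exists>I. I \<noteq> {} \<and> I \<subset> {0..<b} \<and> W = wall b s I)"

definition parallel_with :: "nat \<Rightarrow> nat \<Rightarrow> (nat \<Rightarrow> vec \<Rightarrow> vec) \<Rightarrow> (vec \<Rightarrow> vec) \<Rightarrow> bool" where
  "parallel_with b s g \<gamma> \<longleftrightarrow>
     (\<forall>j<b. bij_betw (g j) (vecs s) (vecs s)) \<and>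
     (\<forall>x\<in>vecs (b * s). \<gamma> x =
        (\<lambda>k. if k < b * s then g (k div s) (block s (k div s) x) (k mod s) else False))"

definition linear_perm :: "nat \<Rightarrow> (vec \<Rightarrow> vec) \<Rightarrow> bool" where
  "linear_perm n L \<longleftrightarrow> bij_betw L (vecs n) (vecs n) \<and>
     (\<forall>x\<in>vecs n. \<forall>y\<in>vecs n. L (x \<oplus> y) = L x \<oplus> L y)"

definition strongly_proper :: "nat \<Rightarrow> nat \<Rightarrow> (vec \<Rightarrow> vec) \<Rightarrow> bool" where
  "strongly_proper b s L \<longleftrightarrow> linear_perm (b * s) L \<and>
     \<not> (\<exists>W W'. is_wall b s W \<and> is_wall b s W' \<and> L ` W = W')"

definition ddt :: "nat \<Rightarrow> (vec \<Rightarrow> vec) \<Rightarrow> vec \<Rightarrow> vec \<Rightarrow> nat" where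
  "ddt s f a c = card {x \<in> vecs s. f x \<oplus> f (x \<oplus> a) = c}"

definition diff_uniform :: "nat \<Rightarrow> (vec \<Rightarrow> vec) \<Rightarrow> nat \<Rightarrow> bool" where
  "diff_uniform s f d \<longleftrightarrow>
     d = Max {ddt s f a c | a c. a \<in> vecs s \<and> a \<noteq> vzero \<and> c \<in> vecs s}"

definition strongly_anti_invariant :: "nat \<Rightarrow> (vec \<Rightarrow> vec) \<Rightarrow> nat \<Rightarrow> bool" where
  "strongly_anti_invariant s f \<epsilon> \<longleftrightarrow> 1 \<le> \<epsilon> \<and> \<epsilon> < s \<and> f vzero = vzero \<and>
     (\<forall>U W. proper_nontrivial_subspace s U \<and> proper_nontrivial_subspace s W \<and> f ` U = W
        \<longrightarrow> dim2 U = dim2 W \<and> dim2 W < s - \<epsilon>)"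

definition feistel :: "(vec \<Rightarrow> vec) \<Rightarrow> vec \<times> vec \<Rightarrow> vec \<times> vec" where
  "feistel \<rho> p = (snd p, fst p \<oplus> \<rho> (snd p))"

definition subgroup2 :: "nat \<Rightarrow> (vec \<times> vec) set \<Rightarrow> bool" where
  "subgroup2 n U \<longleftrightarrow> U \<subseteq> vecs n \<times> vecs n \<and> (vzero, vzero) \<in> U \<and>
     (\<forall>u\<in>U. \<forall>v\<in>U. padd u v \<in> U)"

definition proper_nontrivial_subgroup2 :: "nat \<Rightarrow> (vec \<times> vec) set \<Rightarrow> bool" where
  "proper_nontrivial_subgroup2 n U \<longleftrightarrow> subgroup2 n U \<and> U \<noteq> {(vzero, vzero)} \<and>
     U \<noteq> vecs n \<times> vecs n"

definition linpart :: "nat \<Rightarrow> (vec \<times> vec) set \<Rightarrow> (vec \<times> vec) set set" where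
  "linpart n U = {(\<lambda>u. padd u v) ` U | v. v \<in> vecs n \<times> vecs n}"

definition nontrivial_partition :: "nat \<Rightarrow> (vec \<times> vec) set set \<Rightarrow> bool" where
  "nontrivial_partition n P \<longleftrightarrow> P \<noteq> {{p} | p. p \<in> vecs n \<times> vecs n} \<and> P \<noteq> {vecs n \<times> vecs n}"

definition part_image :: "('a set) set \<Rightarrow> ('a \<Rightarrow> 'a) \<Rightarrow> ('a set) set" where
  "part_image P f = {f ` A | A. A \<in> P}"

definition Aset :: "nat \<Rightarrow> (vec \<times> vec) set \<Rightarrow> vec set" where
  "Aset n U = {a \<in> vecs n. \<exists>c\<in>vecs n. (a, c) \<in> U}"

definition Dset :: "nat \<Rightarrow> (vec \<times> vec) set \<Rightarrow> vec set" where
  "Dset n U = {d \<in> vecs n. (vzero, d) \<in> U}"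

end

theory Submission
  imports Defs
begin


lemma vadd_comm: "x \<oplus> y = y \<oplus> x" by (auto simp: vadd_def fun_eq_iff)
lemma vadd_assoc: "(x \<oplus> y) \<oplus> z = x \<oplus> (y \<oplus> z)" by (auto simp: vadd_def fun_eq_iff)
lemma vadd_left_commute: "x \<oplus> (y \<oplus> z) = y \<oplus> (x \<oplus> z)" by (auto simp: vadd_def fun_eq_iff)
lemma vadd_self[simp]: "x \<oplus> x = vzero" by (auto simp: vadd_def vzero_def fun_eq_iff)
lemma vadd_zero[simp]: "x \<oplus> vzero = x" by (auto simp: vadd_def vzero_def fun_eq_iff)
lemma zero_vadd[simp]: "vzero \<oplus> x = x" by (auto simp: vadd_def vzero_def fun_eq_iff)
lemma vadd_cancel[simp]: "x \<oplus> (x \<oplus> y) = y" by (auto simp: vadd_def fun_eq_iff)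
lemma vadd_cancel2[simp]: "(y \<oplus> x) \<oplus> x = y" by (auto simp: vadd_def fun_eq_iff)
lemma vadd_eq_zero_iff: "x \<oplus> y = vzero \<longleftrightarrow> x = y" by (auto simp: vadd_def vzero_def fun_eq_iff)
lemma vadd_left_cancel_iff: "x \<oplus> y = x \<oplus> z \<longleftrightarrow> y = z" by (auto simp: vadd_def fun_eq_iff)

lemma vzero_vecs[simp]: "vzero \<in> vecs m" by (simp add: vecs_def vzero_def)
lemma vadd_vecs: "x \<in> vecs m \<Longrightarrow> y \<in> vecs m \<Longrightarrow> x \<oplus> y \<in> vecs m"
  by (auto simp: vecs_def vadd_def)

lemma vecs_bij: "bij_betw (\<lambda>x. {k. x k}) (vecs m) (Pow {0..<m})"
proof (rule bij_betwI')
  fix x y assume "x \<in> vecs m" "y \<in> vecs m"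
  show "({k. x k} = {k. y k}) = (x = y)" by (auto simp: fun_eq_iff)
next
  fix x assume "x \<in> vecs m" then show "{k. x k} \<in> Pow {0..<m}"
    by (auto simp: vecs_def) (meson not_le)
next
  fix S assume "S \<in> Pow {0..<m}"
  then show "\<exists>x\<in>vecs m. S = {k. x k}"
    by (intro bexI[of _ "\<lambda>k. k \<in> S"]) (auto simp: vecs_def)
qed

lemma finite_vecs[simp]: "finite (vecs m)"
  using bij_betw_finite[OF vecs_bij] by simp

lemma card_vecs: "card (vecs m) = 2 ^ m"
  using bij_betw_same_card[OF vecs_bij, of m] by (simp add: card_Pow)

lemma subspace_card_pow2_aux:
  assumes "finite W" "\<forall>x\<in>W. \<forall>y\<in>W. x \<oplus> y \<in> W"
  shows "W' \<subseteq> W \<Longrightarrow> vzero \<in> W' \<Longrightarrow> (\<forall>x\<in>W'. \<forall>y\<in>W'. x \<oplus> y \<in> W') \<Longrightarrow> card W' = 2 ^ k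
    \<Longrightarrow> \<exists>k'. card W = 2 ^ k'"
proof (induction "card W - card W'" arbitrary: W' k rule: less_induct)
  case less
  show ?case
  proof (cases "W' = W")
    case True then show ?thesis using less.prems(4) by auto
  next
    case False
    then obtain w where w: "w \<in> W" "w \<notin> W'" using less.prems(1) by blast
    define W'' where "W'' = W' \<union> (\<lambda>x. x \<oplus> w) ` W'"
    have fin': "finite W'" using less.prems(1) assms(1) finite_subset by blast
    have disj: "W' \<inter> (\<lambda>x. x \<oplus> w) ` W' = {}"
    proof (rule ccontr)
      assume "W' \<inter> (\<lambda>x. x \<oplus> w) ` W' \<noteq> {}"
      then obtain x y where "x \<in> W'" "y \<in> W'" "y = x \<oplus> w" by blast
      then have "w = x \<oplus> y" by simp
      then show False using w \<open>x \<in> W'\<close> \<open>y \<in> W'\<close> less.prems(3) by blast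
    qed
    have inj: "inj_on (\<lambda>x. x \<oplus> w) W'"
    proof (rule inj_onI)
      fix x y assume "x \<oplus> w = y \<oplus> w"
      then have "(x \<oplus> w) \<oplus> w = (y \<oplus> w) \<oplus> w" by simp
      then show "x = y" by simp
    qed
    have cardW'': "card W'' = 2 ^ Suc k"
      unfolding W''_def using card_Un_disjoint[OF fin' finite_imageI[OF fin'] disj]
        card_image[OF inj] less.prems(4) by simp
    have sub: "W'' \<subseteq> W"
    proof
      fix x assume "x \<in> W''"
      then consider "x \<in> W'" | x' where "x' \<in> W'" "x = x' \<oplus> w" unfolding W''_def by blast
      then show "x \<in> W"
      proof cases
        case 1 then show ?thesis using less.prems(1) by blast
      next
        case (2 x') then have "x' \<in> W" using less.prems(1) by blast
        then show ?thesis using 2 w(1) assms(2) by blast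
      qed
    qed
    have cl: "\<forall>x\<in>W''. \<forall>y\<in>W''. x \<oplus> y \<in> W''"
    proof (intro ballI)
      fix x y assume "x \<in> W''" "y \<in> W''"
      then consider "x \<in> W'" "y \<in> W'" | x' where "x \<in> W'" "y = x' \<oplus> w" "x' \<in> W'"
        | x' where "x = x' \<oplus> w" "x' \<in> W'" "y \<in> W'"
        | x' y' where "x = x' \<oplus> w" "x' \<in> W'" "y = y' \<oplus> w" "y' \<in> W'"
        unfolding W''_def by blast
      then show "x \<oplus> y \<in> W''"
      proof cases
        case 1 then show ?thesis using less.prems(3) unfolding W''_def by blast
      next
        case (2 x')
        then have "x \<oplus> y = (x \<oplus> x') \<oplus> w" by (simp add: vadd_assoc)
        moreover have "x \<oplus> x' \<in> W'" using 2 less.prems(3) by blast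
        ultimately show ?thesis unfolding W''_def by (metis UnI2 image_eqI)
      next
        case (3 x')
        then have "x \<oplus> y = (x' \<oplus> y) \<oplus> w" by (auto simp: vadd_def fun_eq_iff)
        moreover have "x' \<oplus> y \<in> W'" using 3 less.prems(3) by blast
        ultimately show ?thesis unfolding W''_def by (metis UnI2 image_eqI)
      next
        case (4 x' y')
        then have "x \<oplus> y = x' \<oplus> y'" by (auto simp: vadd_def fun_eq_iff)
        moreover have "x' \<oplus> y' \<in> W'" using 4 less.prems(3) by blast
        ultimately show ?thesis unfolding W''_def by (metis UnI1)
      qed
    qed
    have z: "vzero \<in> W''" using less.prems(2) unfolding W''_def by blast
    have lt: "card W - card W'' < card W - card W'"
    proof -
      have "card W' < card W''" using cardW'' less.prems(4) by simp
      moreover have "card W'' \<le> card W" using sub assms(1) card_mono by blast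
      ultimately show ?thesis by linarith
    qed
    show ?thesis using less.hyps[OF lt sub z cl cardW''] .
  qed
qed

lemma subspace_card_pow2:
  assumes "subspace2 m W" shows "\<exists>k. card W = 2 ^ k"
proof -
  have fin: "finite W" using assms finite_subset[OF _ finite_vecs] by (auto simp: subspace2_def)
  show ?thesis
    apply (rule subspace_card_pow2_aux[OF fin _ , of "{vzero}" 0])
    using assms by (auto simp: subspace2_def)
qed

lemma dim2_eq: "card W = 2 ^ k \<Longrightarrow> dim2 W = k"
  unfolding dim2_def by (rule the_equality) auto



definition emb :: "nat \<Rightarrow> nat \<Rightarrow> vec \<Rightarrow> vec" where
  "emb s j y = (\<lambda>k. if j * s \<le> k \<and> k < j * s + s then y (k - j * s) else False)"

lemma mult_block_le: "i < j \<Longrightarrow> i * s + s \<le> j * (s::nat)"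
  using mult_le_mono1[of "Suc i" j s] by simp

lemma vecs_D: "y \<in> vecs s \<Longrightarrow> s \<le> k \<Longrightarrow> \<not> y k" by (simp add: vecs_def)

lemma block_emb: assumes y: "y \<in> vecs s"
  shows "block s i (emb s j y) = (if i = j then y else vzero)"
proof (cases "i = j")
  case True
  then show ?thesis using vecs_D[OF y] by (auto simp: block_def emb_def fun_eq_iff)
next
  case False
  have "\<not> (j * s \<le> i * s + k \<and> i * s + k < j * s + s)" if "k < s" for k
  proof (cases "i < j")
    case True then show ?thesis using mult_block_le[OF True, of s] that by linarith
  next
    case f: False then have "j < i" using \<open>i \<noteq> j\<close> by simp
    then show ?thesis using mult_block_le[OF \<open>j < i\<close>, of s] that by linarith
  qed
  then show ?thesis using False by (auto simp: block_def emb_def fun_eq_iff vzero_def)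
qed

lemma emb_vecs: assumes "j < b" "y \<in> vecs s" shows "emb s j y \<in> vecs (b * s)"
proof -
  have "j * s + s \<le> b * s" using mult_le_mono1[of "Suc j" b s] assms(1) by simp
  then show ?thesis by (auto simp: vecs_def emb_def)
qed

lemma emb_vadd: "emb s j (y \<oplus> z) = emb s j y \<oplus> emb s j z"
  by (auto simp: emb_def vadd_def fun_eq_iff)
lemma emb_zero[simp]: "emb s j vzero = vzero"
  by (auto simp: emb_def vzero_def fun_eq_iff)
lemma block_vadd: "block s j (x \<oplus> y) = block s j x \<oplus> block s j y"
  by (auto simp: block_def vadd_def fun_eq_iff)
lemma block_zero[simp]: "block s j vzero = vzero"
  by (auto simp: block_def vzero_def fun_eq_iff)
lemma block_vecs[simp]: "block s j x \<in> vecs s"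
  by (auto simp: block_def vecs_def)

lemma block_at: "k < s \<Longrightarrow> block s j x k = x (j * s + k)" by (simp add: block_def)

lemma vec_eq_blocks:
  assumes "x \<in> vecs (b * s)" "y \<in> vecs (b * s)" "0 < s" "\<forall>j<b. block s j x = block s j y"
  shows "x = y"
proof (rule ext)
  fix k
  show "x k = y k"
  proof (cases "k < b * s")
    case True
    have j: "k div s < b" using True by (simp add: less_mult_imp_div_less)
    have m: "k mod s < s" using assms(3) by simp
    have "x k = block s (k div s) x (k mod s)" using block_at[OF m] by (simp add: mult.commute)
    also have "\<dots> = block s (k div s) y (k mod s)" using assms(4) j by simp
    also have "\<dots> = y k" using block_at[OF m] by (simp add: mult.commute)
    finally show ?thesis .
  next
    case False then show ?thesis using assms(1,2) by (simp add: vecs_def)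
  qed
qed

lemma block_gamma:
  assumes par: "parallel_with b s g \<gamma>" and x: "x \<in> vecs (b * s)" and j: "j < b" and s: "0 < s"
  shows "block s j (\<gamma> x) = g j (block s j x)"
proof (rule ext)
  fix k
  have gx: "\<gamma> x = (\<lambda>k. if k < b * s then g (k div s) (block s (k div s) x) (k mod s) else False)"
    using par x by (simp add: parallel_with_def)
  have gv: "g j (block s j x) \<in> vecs s" using par j block_vecs[of s j x] unfolding parallel_with_def bij_betw_def by blast
  show "block s j (\<gamma> x) k = g j (block s j x) k"
  proof (cases "k < s")
    case True
    have lt: "j * s + k < b * s" using mult_le_mono1[of "Suc j" b s] j True by simp
    have d: "(j * s + k) div s = j" using True by simp
    have m: "(j * s + k) mod s = k" using True by simp
    show ?thesis using True lt d m by (simp add: block_def gx)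
  next
    case False then show ?thesis using vecs_D[OF gv] by (simp add: block_def)
  qed
qed

lemma gamma_vecs: "parallel_with b s g \<gamma> \<Longrightarrow> x \<in> vecs (b * s) \<Longrightarrow> \<gamma> x \<in> vecs (b * s)"
  by (simp add: parallel_with_def vecs_def)

lemma nonzero_block:
  assumes "x \<in> vecs (b * s)" "x \<noteq> vzero" "0 < s" shows "\<exists>j<b. block s j x \<noteq> vzero"
  using vec_eq_blocks[OF assms(1) vzero_vecs assms(3)] assms(2) by auto

lemma emb_block:
  assumes "x \<in> vecs (b * s)" "j < b" "0 < s" "\<forall>i<b. i \<noteq> j \<longrightarrow> block s i x = vzero"
  shows "x = emb s j (block s j x)"
  apply (rule vec_eq_blocks[OF assms(1) emb_vecs[OF assms(2) block_vecs] assms(3)])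
  using assms(4) by (simp add: block_emb)

lemma emb_inj: "y \<in> vecs s \<Longrightarrow> z \<in> vecs s \<Longrightarrow> emb s j y = emb s j z \<Longrightarrow> y = z"
  by (metis block_emb)



lemma ddt_le:
  assumes du: "diff_uniform s g d" and a: "a \<in> vecs s" "a \<noteq> vzero" and c: "c \<in> vecs s"
  shows "ddt s g a c \<le> d"
proof -
  have "{ddt s g a c |a c. a \<in> vecs s \<and> a \<noteq> vzero \<and> c \<in> vecs s}
        \<subseteq> {ddt s g a c |a c. a \<in> vecs s \<and> c \<in> vecs s}" by auto
  moreover have "finite {ddt s g a c |a c. a \<in> vecs s \<and> c \<in> vecs s}"
    using finite_image_set2[of "\<lambda>a. a \<in> vecs s" "\<lambda>c. c \<in> vecs s" "ddt s g"] by simp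
  ultimately have fin: "finite {ddt s g a c |a c. a \<in> vecs s \<and> a \<noteq> vzero \<and> c \<in> vecs s}"
    by (rule finite_subset)
  have "ddt s g a c \<in> {ddt s g a c |a c. a \<in> vecs s \<and> a \<noteq> vzero \<and> c \<in> vecs s}"
    using a c by auto
  then have "ddt s g a c \<le> Max {ddt s g a c |a c. a \<in> vecs s \<and> a \<noteq> vzero \<and> c \<in> vecs s}"
    by (rule Max_ge[OF fin])
  then show ?thesis using du unfolding diff_uniform_def by simp
qed

lemma sbox_maps: "bij_betw g (vecs s) (vecs s) \<Longrightarrow> y \<in> vecs s \<Longrightarrow> g y \<in> vecs s"
  by (auto simp: bij_betw_def)

lemma SB1:
  assumes gb: "bij_betw g (vecs s) (vecs s)" and du: "diff_uniform s g (2 ^ \<delta>)" and dl: "\<delta> < s"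
    and a: "a \<in> vecs s" "a \<noteq> vzero"
  shows "\<not> (\<forall>y\<in>vecs s. g y \<oplus> g (y \<oplus> a) = c)"
proof
  assume H: "\<forall>y\<in>vecs s. g y \<oplus> g (y \<oplus> a) = c"
  have "c = g vzero \<oplus> g (vzero \<oplus> a)" using bspec[OF H vzero_vecs] by simp
  then have c: "c \<in> vecs s" by (simp add: vadd_vecs sbox_maps[OF gb] a)
  have "{x \<in> vecs s. g x \<oplus> g (x \<oplus> a) = c} = vecs s" using H by auto
  then have "ddt s g a c = 2 ^ s" by (simp add: ddt_def card_vecs)
  moreover have "ddt s g a c \<le> 2 ^ \<delta>" using ddt_le[OF du a c] .
  moreover have "(2::nat) ^ \<delta> < 2 ^ s" using dl by simp
  ultimately show False by simp
qed

lemma SB2: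
  assumes gb: "bij_betw g (vecs s) (vecs s)" and du: "diff_uniform s g (2 ^ \<delta>)"
    and a: "a \<in> vecs s" "a \<noteq> vzero" and S: "S \<subseteq> vecs s"
    and H: "\<forall>y\<in>vecs s. g y \<oplus> g (y \<oplus> a) \<in> S"
  shows "2 ^ s \<le> card S * 2 ^ \<delta>"
proof -
  have finS: "finite S" by (rule finite_subset[OF S finite_vecs])
  have "vecs s \<subseteq> (\<Union>c\<in>S. {x \<in> vecs s. g x \<oplus> g (x \<oplus> a) = c})" using H by auto
  then have "card (vecs s) \<le> card (\<Union>c\<in>S. {x \<in> vecs s. g x \<oplus> g (x \<oplus> a) = c})"
    by (rule card_mono[rotated]) (simp add: finS)
  also have "\<dots> \<le> (\<Sum>c\<in>S. card {x \<in> vecs s. g x \<oplus> g (x \<oplus> a) = c})"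
    by (rule card_UN_le[OF finS])
  also have "\<dots> = (\<Sum>c\<in>S. ddt s g a c)" by (simp add: ddt_def)
  also have "\<dots> \<le> card S * 2 ^ \<delta>"
    using sum_bounded_above[of S "ddt s g a" "2 ^ \<delta>"] ddt_le[OF du a] S by auto
  finally show ?thesis by (simp add: card_vecs)
qed



lemma xor3_zero: "p \<oplus> q \<oplus> r = vzero \<Longrightarrow> q \<oplus> p = r"
  by (auto simp: vadd_def vzero_def fun_eq_iff)
lemma xor3_swap: "(p \<oplus> q \<oplus> r) \<oplus> r = q \<oplus> p"
  by (auto simp: vadd_def fun_eq_iff)

lemma gamma_emb:
  assumes par: "parallel_with b s g \<gamma>" and s: "0 < s" and g0: "\<forall>i<b. g i vzero = vzero"
    and j: "j < b" and y: "y \<in> vecs s"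
  shows "\<gamma> (emb s j y) = emb s j (g j y)"
proof -
  have gy: "g j y \<in> vecs s" using par j y by (auto simp: parallel_with_def bij_betw_def)
  have ev: "emb s j y \<in> vecs (b * s)" by (rule emb_vecs[OF j y])
  show ?thesis
  proof (rule vec_eq_blocks[OF gamma_vecs[OF par ev] emb_vecs[OF j gy] s], intro allI impI)
    fix i assume i: "i < b"
    show "block s i (\<gamma> (emb s j y)) = block s i (emb s j (g j y))"
      using block_gamma[OF par ev i s] block_emb[OF y, of i j] block_emb[OF gy, of i j] g0 i
      by simp
  qed
qed

lemma key_lemma:
  assumes s: "0 < s" and dl: "\<delta> < s"
    and par: "parallel_with b s g \<gamma>"
    and du: "\<forall>j<b. diff_uniform s (g j) (2 ^ \<delta>)"
    and sai: "\<forall>j<b. strongly_anti_invariant s (g j) (\<delta> - 1)"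
    and rho: "\<forall>x\<in>vecs (b * s). \<rho> x = L (\<gamma> x)"
    and Llin: "linear_perm (b * s) L"
    and X: "subspace2 (b * s) X" and Y: "subspace2 (b * s) Y"
    and der: "\<forall>x\<in>X. \<forall>v\<in>vecs (b * s). \<rho> (x \<oplus> v) \<oplus> \<rho> v \<in> Y"
    and onto: "\<rho> ` X = Y"
    and x: "x \<in> X" and j: "j < b" and nz: "block s j x \<noteq> vzero"
  shows "\<forall>y\<in>vecs s. emb s j y \<in> X"
proof -
  let ?V = "vecs (b * s)"
  have XV: "X \<subseteq> ?V" and X0: "vzero \<in> X" and Xc: "\<forall>u\<in>X. \<forall>w\<in>X. u \<oplus> w \<in> X"
    using X by (auto simp: subspace2_def)
  have YV: "Y \<subseteq> ?V" and Y0: "vzero \<in> Y" and Yc: "\<forall>u\<in>Y. \<forall>w\<in>Y. u \<oplus> w \<in> Y"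
    using Y by (auto simp: subspace2_def)
  have Linj: "inj_on L ?V" and Ladd: "\<forall>u\<in>?V. \<forall>w\<in>?V. L (u \<oplus> w) = L u \<oplus> L w"
    using Llin by (auto simp: linear_perm_def bij_betw_def)
  have L0: "L vzero = vzero" using Ladd[rule_format, OF vzero_vecs vzero_vecs] by simp
  have gb: "\<forall>i<b. bij_betw (g i) (vecs s) (vecs s)" using par by (simp add: parallel_with_def)
  have gV: "\<And>i y. i < b \<Longrightarrow> y \<in> vecs s \<Longrightarrow> g i y \<in> vecs s" using gb by (auto simp: bij_betw_def)
  have ginj: "\<And>i. i < b \<Longrightarrow> inj_on (g i) (vecs s)" using gb by (auto simp: bij_betw_def)
  have g0: "\<forall>i<b. g i vzero = vzero" using sai by (simp add: strongly_anti_invariant_def)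
  have d1: "1 \<le> \<delta> - 1" using sai j by (auto simp: strongly_anti_invariant_def)
  have gamV: "\<And>u. u \<in> ?V \<Longrightarrow> \<gamma> u \<in> ?V" using gamma_vecs[OF par] .
  define Z where "Z = {z \<in> ?V. L z \<in> Y}"
  have Zimg: "\<gamma> ` X = Z"
  proof
    show "\<gamma> ` X \<subseteq> Z"
    proof
      fix z assume "z \<in> \<gamma> ` X"
      then obtain u where u: "u \<in> X" "z = \<gamma> u" by blast
      have "L z = \<rho> u" using u rho XV by auto
      moreover have "\<rho> u \<in> Y" using onto u by blast
      ultimately show "z \<in> Z" unfolding Z_def using u XV gamV by auto
    qed
  next
    show "Z \<subseteq> \<gamma> ` X"
    proof
      fix z assume z: "z \<in> Z"
      then have "L z \<in> \<rho> ` X" using onto by (simp add: Z_def)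
      then obtain u where u: "u \<in> X" "L z = \<rho> u" by blast
      then have "L z = L (\<gamma> u)" using rho XV by auto
      then have "z = \<gamma> u" using Linj z u XV gamV unfolding Z_def inj_on_def by auto
      then show "z \<in> \<gamma> ` X" using u by blast
    qed
  qed
  have Z0: "vzero \<in> Z" using L0 Y0 by (simp add: Z_def)
  have Zc: "\<forall>u\<in>Z. \<forall>w\<in>Z. u \<oplus> w \<in> Z"
  proof (intro ballI)
    fix u w assume "u \<in> Z" "w \<in> Z"
    then show "u \<oplus> w \<in> Z" using Ladd Yc by (auto simp: Z_def vadd_vecs)
  qed
  have Zder: "\<gamma> (u \<oplus> v) \<oplus> \<gamma> v \<in> Z" if u: "u \<in> X" and v: "v \<in> ?V" for u v
  proof -
    have uv: "u \<oplus> v \<in> ?V" using u v XV vadd_vecs by blast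
    have "L (\<gamma> (u \<oplus> v) \<oplus> \<gamma> v) = \<rho> (u \<oplus> v) \<oplus> \<rho> v"
      using Ladd gamV[OF uv] gamV[OF v] rho uv v by auto
    then show ?thesis using der u v gamV[OF uv] gamV[OF v] by (auto simp: Z_def vadd_vecs)
  qed
  define Xj where "Xj = {y \<in> vecs s. emb s j y \<in> X}"
  define Zj where "Zj = {y \<in> vecs s. emb s j y \<in> Z}"
  have Xjs: "subspace2 s Xj" unfolding subspace2_def Xj_def
    using X0 Xc by (auto simp: emb_vadd vadd_vecs)
  have Zjs: "subspace2 s Zj" unfolding subspace2_def Zj_def
    using Z0 Zc by (auto simp: emb_vadd vadd_vecs)
  have Zjc: "\<forall>u\<in>Zj. \<forall>w\<in>Zj. u \<oplus> w \<in> Zj" using Zjs by (simp add: subspace2_def)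
  have gemb: "\<And>y. y \<in> vecs s \<Longrightarrow> \<gamma> (emb s j y) = emb s j (g j y)"
    using gamma_emb[OF par s g0 j] .
  have gXZ: "g j ` Xj = Zj"
  proof
    show "g j ` Xj \<subseteq> Zj"
    proof
      fix z assume "z \<in> g j ` Xj"
      then obtain y where y: "y \<in> Xj" "z = g j y" by blast
      have "\<gamma> (emb s j y) \<in> Z" using Zimg y by (auto simp: Xj_def)
      then show "z \<in> Zj" using gemb y gV[OF j] by (auto simp: Xj_def Zj_def)
    qed
  next
    show "Zj \<subseteq> g j ` Xj"
    proof
      fix z assume z: "z \<in> Zj"
      then have "emb s j z \<in> \<gamma> ` X" using Zimg by (simp add: Zj_def)
      then obtain w where w: "w \<in> X" "emb s j z = \<gamma> w" by blast
      have wV: "w \<in> ?V" using w XV by blast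
      have zs: "z \<in> vecs s" using z by (simp add: Zj_def)
      have bw: "block s i w = vzero" if i: "i < b" "i \<noteq> j" for i
      proof -
        have "g i (block s i w) = block s i (\<gamma> w)" using block_gamma[OF par wV i(1) s] by simp
        also have "\<dots> = vzero" using w(2)[symmetric] block_emb[OF zs, of i j] i by simp
        finally have "g i (block s i w) = g i vzero" using g0 i by simp
        then show ?thesis using ginj[OF i(1)] unfolding inj_on_def by auto
      qed
      have wemb: "w = emb s j (block s j w)" using emb_block[OF wV j s] bw by blast
      have "block s j w \<in> Xj" using w wemb by (auto simp: Xj_def)
      moreover have "g j (block s j w) = z"
        using block_gamma[OF par wV j s] w(2) block_emb[OF zs, of j j] by simp
      ultimately show "z \<in> g j ` Xj" by blast
    qed
  qed
  have deriv: "g j (a \<oplus> y) \<oplus> g j y \<oplus> g j a \<in> Zj"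
    if u: "u \<in> X" and a: "block s j u = a" and y: "y \<in> vecs s" for u a y
  proof -
    define v where "v = emb s j y"
    have vV: "v \<in> ?V" using emb_vecs[OF j y] by (simp add: v_def)
    have uV: "u \<in> ?V" using u XV by blast
    have uvV: "u \<oplus> v \<in> ?V" using uV vV by (rule vadd_vecs)
    define w where "w = (\<gamma> (u \<oplus> v) \<oplus> \<gamma> v) \<oplus> \<gamma> u"
    have wZ: "w \<in> Z" unfolding w_def using Zc Zder[OF u vV] Zimg u by blast
    have as: "a \<in> vecs s" using a block_vecs by blast
    define h where "h = g j (a \<oplus> y) \<oplus> g j y \<oplus> g j a"
    have hs: "h \<in> vecs s" unfolding h_def using gV[OF j] as y by (simp add: vadd_vecs)
    have wV: "w \<in> ?V" unfolding w_def using gamV uV vV uvV by (simp add: vadd_vecs)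
    have "w = emb s j h"
    proof (rule vec_eq_blocks[OF wV emb_vecs[OF j hs] s], intro allI impI)
      fix i assume i: "i < b"
      have bw: "block s i w = g i (block s i u \<oplus> block s i v) \<oplus> g i (block s i v) \<oplus> g i (block s i u)"
        unfolding w_def using block_gamma[OF par _ i s] uV vV uvV by (simp add: block_vadd)
      have bv: "block s i v = (if i = j then y else vzero)" using block_emb[OF y] by (simp add: v_def)
      show "block s i w = block s i (emb s j h)"
      proof (cases "i = j")
        case True
        then show ?thesis using bw bv a block_emb[OF hs, of i j] by (simp add: h_def)
      next
        case False
        then show ?thesis using bw bv block_emb[OF hs, of i j] g0 i by simp
      qed
    qed
    then show ?thesis using wZ hs by (simp add: Zj_def h_def)
  qed
  define a where "a = block s j x"
  have as: "a \<in> vecs s" by (simp add: a_def)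
  have "\<exists>z\<in>Zj. z \<noteq> vzero"
  proof (rule ccontr)
    assume "\<not> (\<exists>z\<in>Zj. z \<noteq> vzero)"
    then have allz: "\<forall>z\<in>Zj. z = vzero" by blast
    have "\<forall>y\<in>vecs s. g j y \<oplus> g j (y \<oplus> a) = g j a"
    proof
      fix y assume y: "y \<in> vecs s"
      have "g j (a \<oplus> y) \<oplus> g j y \<oplus> g j a = vzero" using allz deriv[OF x a_def[symmetric] y] by blast
      then have "g j (y \<oplus> a) \<oplus> g j y \<oplus> g j a = vzero" by (simp only: vadd_comm[of a y])
      then show "g j y \<oplus> g j (y \<oplus> a) = g j a" by (rule xor3_zero)
    qed
    moreover have "a \<noteq> vzero" using nz by (simp add: a_def)
    moreover have "bij_betw (g j) (vecs s) (vecs s)" using gb j by blast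
    moreover have "diff_uniform s (g j) (2 ^ \<delta>)" using du j by blast
    ultimately show False using SB1[of "g j" s \<delta> a "g j a"] dl as by blast
  qed
  then obtain z where z: "z \<in> Zj" "z \<noteq> vzero" by blast
  then obtain a' where a': "a' \<in> Xj" "g j a' = z" using gXZ by (metis imageE)
  have a's: "a' \<in> vecs s" using a' by (simp add: Xj_def)
  have a'nz: "a' \<noteq> vzero" using a' z g0 j by auto
  have x'X: "emb s j a' \<in> X" using a' by (simp add: Xj_def)
  have bx': "block s j (emb s j a') = a'" using block_emb[OF a's] by simp
  have stepB: "\<forall>y\<in>vecs s. g j y \<oplus> g j (y \<oplus> a') \<in> Zj - {vzero}"
  proof
    fix y assume y: "y \<in> vecs s"
    have h: "g j (a' \<oplus> y) \<oplus> g j y \<oplus> g j a' \<in> Zj" using deriv[OF x'X bx' y] .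
    have "(g j (a' \<oplus> y) \<oplus> g j y \<oplus> g j a') \<oplus> g j a' \<in> Zj" using Zjc h z a' by blast
    moreover have "(g j (a' \<oplus> y) \<oplus> g j y \<oplus> g j a') \<oplus> g j a' = g j y \<oplus> g j (y \<oplus> a')"
      by (simp only: vadd_comm[of a' y] xor3_swap)
    ultimately have in1: "g j y \<oplus> g j (y \<oplus> a') \<in> Zj" by simp
    have "g j y \<oplus> g j (y \<oplus> a') \<noteq> vzero"
    proof
      assume "g j y \<oplus> g j (y \<oplus> a') = vzero"
      then have "g j y = g j (y \<oplus> a')" by (simp add: vadd_eq_zero_iff)
      then have "y = y \<oplus> a'" using ginj[OF j] y a's vadd_vecs unfolding inj_on_def by metis
      then have "y \<oplus> y = y \<oplus> (y \<oplus> a')" by simp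
      then show False using a'nz by simp
    qed
    then show "g j y \<oplus> g j (y \<oplus> a') \<in> Zj - {vzero}" using in1 by blast
  qed
  have ZjV: "Zj - {vzero} \<subseteq> vecs s" by (auto simp: Zj_def)
  have cnt: "2 ^ s \<le> card (Zj - {vzero}) * 2 ^ \<delta>"
    by (rule SB2[of "g j" s \<delta> a' "Zj - {vzero}", OF _ _ a's a'nz ZjV stepB]) (use gb du j in blast)+
  obtain k where k: "card Zj = 2 ^ k" using subspace_card_pow2[OF Zjs] by blast
  have Zj0: "vzero \<in> Zj" using Zjs by (simp add: subspace2_def)
  have finZj: "finite Zj" using finite_subset[OF _ finite_vecs] Zjs by (auto simp: subspace2_def)
  have "card (Zj - {vzero}) = 2 ^ k - 1" using k Zj0 finZj by (simp add: card_Diff_singleton)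
  then have c2: "(2::nat) ^ s \<le> (2 ^ k - 1) * 2 ^ \<delta>" using cnt by simp
  have "(2 ^ k - 1) * 2 ^ \<delta> < (2::nat) ^ k * 2 ^ \<delta>" by (intro mult_strict_right_mono) auto
  then have "(2::nat) ^ s < 2 ^ k * 2 ^ \<delta>" using c2 by linarith
  then have "(2::nat) ^ s < 2 ^ (k + \<delta>)" by (simp add: power_add)
  then have sk: "s < k + \<delta>" using power_less_imp_less_exp[of "2::nat" s "k + \<delta>"] by simp
  have "Xj = vecs s"
  proof (rule ccontr)
    assume ne: "Xj \<noteq> vecs s"
    have XjV: "Xj \<subseteq> vecs s" by (auto simp: Xj_def)
    have "Zj \<noteq> vecs s"
    proof
      assume "Zj = vecs s"
      then have "g j ` Xj = g j ` vecs s" using gXZ gb j by (simp add: bij_betw_def)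
      then have "Xj = vecs s" using inj_on_image_eq_iff[OF ginj[OF j] XjV] by simp
      then show False using ne by simp
    qed
    moreover have "Xj \<noteq> {vzero}" using a' a'nz by auto
    moreover have "Zj \<noteq> {vzero}" using z by auto
    ultimately have pX: "proper_nontrivial_subspace s Xj" and pZ: "proper_nontrivial_subspace s Zj"
      using Xjs Zjs ne by (auto simp: proper_nontrivial_subspace_def)
    have sj: "strongly_anti_invariant s (g j) (\<delta> - 1)" using sai j by blast
    have "\<forall>U W. proper_nontrivial_subspace s U \<and> proper_nontrivial_subspace s W \<and> g j ` U = W
        \<longrightarrow> dim2 U = dim2 W \<and> dim2 W < s - (\<delta> - 1)"
      using sj unfolding strongly_anti_invariant_def by blast
    then have "dim2 Zj < s - (\<delta> - 1)" using pX pZ gXZ by blast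
    then have "k < s - (\<delta> - 1)" using dim2_eq[OF k] by simp
    then show False using sk d1 by linarith
  qed
  then show ?thesis by (auto simp: Xj_def)
qed



definition supp :: "nat \<Rightarrow> nat \<Rightarrow> vec set \<Rightarrow> nat set" where
  "supp b s X = {j. j < b \<and> (\<exists>x\<in>X. block s j x \<noteq> vzero)}"

lemma trunc_step:
  "(\<lambda>k. if k < Suc m * s then w k else False) =
   (\<lambda>k. if k < m * s then w k else False) \<oplus> emb s m (block s m w)"
proof (rule ext)
  fix k
  consider "k < m * s" | "m * s \<le> k \<and> k < m * s + s" | "m * s + s \<le> k" by linarith
  then show "(if k < Suc m * s then w k else False) =
    ((\<lambda>k. if k < m * s then w k else False) \<oplus> emb s m (block s m w)) k"
  proof cases
    case 1 then show ?thesis by (auto simp: vadd_def emb_def)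
  next
    case 2
    then have "k - m * s < s" "m * s + (k - m * s) = k" by linarith+
    then show ?thesis using 2 by (auto simp: vadd_def emb_def block_def)
  next
    case 3 then show ?thesis by (auto simp: vadd_def emb_def)
  qed
qed

lemma subspace_wall:
  assumes s: "0 < s" and X: "subspace2 (b * s) X"
    and H: "\<forall>x\<in>X. \<forall>j<b. block s j x \<noteq> vzero \<longrightarrow> (\<forall>y\<in>vecs s. emb s j y \<in> X)"
  shows "X = wall b s (supp b s X)"
proof
  show "X \<subseteq> wall b s (supp b s X)"
    using X by (auto simp: wall_def supp_def subspace2_def)
next
  show "wall b s (supp b s X) \<subseteq> X"
  proof
    fix w assume w: "w \<in> wall b s (supp b s X)"
    have wV: "w \<in> vecs (b * s)" using w by (simp add: wall_def)
    have X0: "vzero \<in> X" and Xc: "\<forall>u\<in>X. \<forall>v\<in>X. u \<oplus> v \<in> X" using X by (auto simp: subspace2_def)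
    have "m \<le> b \<longrightarrow> (\<lambda>k. if k < m * s then w k else False) \<in> X" for m
    proof (induction m)
      case 0
      have "(\<lambda>k. if k < 0 * s then w k else False) = vzero" by (simp add: vzero_def fun_eq_iff)
      then show ?case using X0 by simp
    next
      case (Suc m)
      show ?case
      proof
        assume mb: "Suc m \<le> b"
        then have m: "m < b" by simp
        have e: "emb s m (block s m w) \<in> X"
        proof (cases "block s m w = vzero")
          case True then show ?thesis using X0 by simp
        next
          case False
          then have "m \<in> supp b s X" using w m by (auto simp: wall_def)
          then obtain x where x: "x \<in> X" "block s m x \<noteq> vzero" by (auto simp: supp_def)
          have "\<forall>y\<in>vecs s. emb s m y \<in> X" using H x m by blast
          then show ?thesis by simp
        qed
        have "(\<lambda>k. if k < m * s then w k else False) \<in> X" using Suc mb by simp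
        then show "(\<lambda>k. if k < Suc m * s then w k else False) \<in> X"
          unfolding trunc_step using Xc e by blast
      qed
    qed
    then have "(\<lambda>k. if k < b * s then w k else False) \<in> X" by blast
    moreover have "(\<lambda>k. if k < b * s then w k else False) = w"
      using wV by (auto simp: vecs_def fun_eq_iff)
    ultimately show "w \<in> X" by simp
  qed
qed

definition good_round :: "nat \<Rightarrow> nat \<Rightarrow> (vec \<Rightarrow> vec) \<Rightarrow> (vec \<Rightarrow> vec) \<Rightarrow> (vec \<Rightarrow> vec) \<Rightarrow> bool" where
  "good_round b s \<rho> \<gamma> L \<longleftrightarrow> bij_betw \<rho> (vecs (b * s)) (vecs (b * s)) \<and> \<rho> vzero = vzero \<and>
     (\<forall>x\<in>vecs (b * s). \<rho> x = L (\<gamma> x)) \<and>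
     (\<exists>\<delta> g. \<delta> < s \<and> parallel_with b s g \<gamma> \<and>
        (\<forall>j<b. diff_uniform s (g j) (2 ^ \<delta>) \<and> strongly_anti_invariant s (g j) (\<delta> - 1))) \<and>
     strongly_proper b s L"

lemma key_round:
  assumes R: "good_round b s \<rho> \<gamma> L" and s: "0 < s"
    and X: "subspace2 (b * s) X" and Y: "subspace2 (b * s) Y"
    and der: "\<forall>x\<in>X. \<forall>v\<in>vecs (b * s). \<rho> (x \<oplus> v) \<oplus> \<rho> v \<in> Y"
    and onto: "\<rho> ` X = Y"
  shows "\<forall>x\<in>X. \<forall>j<b. block s j x \<noteq> vzero \<longrightarrow> (\<forall>y\<in>vecs s. emb s j y \<in> X)"
proof -
  obtain \<delta> g where dg: "\<delta> < s" "parallel_with b s g \<gamma>"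
    "\<forall>j<b. diff_uniform s (g j) (2 ^ \<delta>)" "\<forall>j<b. strongly_anti_invariant s (g j) (\<delta> - 1)"
    using R unfolding good_round_def by blast
  have rho: "\<forall>x\<in>vecs (b * s). \<rho> x = L (\<gamma> x)" and Ll: "linear_perm (b * s) L"
    using R by (auto simp: good_round_def strongly_proper_def)
  show ?thesis
    using key_lemma[OF s dg(1) dg(2) dg(3) dg(4) rho Ll X Y der onto] by blast
qed

lemma wall_sub: "wall b s I \<subseteq> vecs (b * s)" by (auto simp: wall_def)

lemma rho_wall:
  assumes R: "good_round b s \<rho> \<gamma> L" and s: "0 < s"
  shows "\<rho> ` wall b s I = L ` wall b s I"
proof -
  obtain \<delta> g where dg: "parallel_with b s g \<gamma>" "\<forall>j<b. strongly_anti_invariant s (g j) (\<delta> - 1)"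
    using R unfolding good_round_def by blast
  have g0: "\<forall>i<b. g i vzero = vzero" using dg(2) by (simp add: strongly_anti_invariant_def)
  have rho: "\<forall>x\<in>vecs (b * s). \<rho> x = L (\<gamma> x)" and rinj: "inj_on \<rho> (vecs (b * s))"
    using R by (auto simp: good_round_def bij_betw_def)
  have ginj: "inj_on \<gamma> (wall b s I)"
  proof (rule inj_onI)
    fix x y assume "x \<in> wall b s I" "y \<in> wall b s I" "\<gamma> x = \<gamma> y"
    then show "x = y" using rho rinj wall_sub unfolding inj_on_def by (metis subsetD)
  qed
  have sub: "\<gamma> ` wall b s I \<subseteq> wall b s I"
  proof
    fix z assume "z \<in> \<gamma> ` wall b s I"
    then obtain x where x: "x \<in> wall b s I" "z = \<gamma> x" by blast
    have xV: "x \<in> vecs (b * s)" using x wall_sub by blast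
    have "\<forall>j<b. j \<notin> I \<longrightarrow> block s j z = vzero"
      using x block_gamma[OF dg(1) xV _ s] g0 by (auto simp: wall_def)
    then show "z \<in> wall b s I" using gamma_vecs[OF dg(1) xV] x by (simp add: wall_def)
  qed
  have fin: "finite (wall b s I)" using finite_subset[OF wall_sub finite_vecs] .
  have geq: "\<gamma> ` wall b s I = wall b s I"
    using card_subset_eq[OF fin sub] card_image[OF ginj] by simp
  have "\<rho> ` wall b s I = L ` (\<gamma> ` wall b s I)"
    using rho wall_sub by (auto simp: image_iff) (metis subsetD)+
  then show ?thesis using geq by simp
qed

lemma wall_all: "wall b s {0..<b} = vecs (b * s)" by (auto simp: wall_def)

lemma nontrivial_wall:
  assumes R: "good_round b s \<rho> \<gamma> L" and s: "0 < s"
    and X: "subspace2 (b * s) X" and Y: "subspace2 (b * s) Y"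
    and der: "\<forall>x\<in>X. \<forall>v\<in>vecs (b * s). \<rho> (x \<oplus> v) \<oplus> \<rho> v \<in> Y"
    and onto: "\<rho> ` X = Y" and nz: "X \<noteq> {vzero}" and nV: "X \<noteq> vecs (b * s)"
  shows "is_wall b s X"
proof -
  have eq: "X = wall b s (supp b s X)"
    using subspace_wall[OF s X key_round[OF R s X Y der onto]] .
  have XV: "X \<subseteq> vecs (b * s)" and X0: "vzero \<in> X" using X by (auto simp: subspace2_def)
  obtain x where x: "x \<in> X" "x \<noteq> vzero" using nz X0 by blast
  obtain j where j: "j < b" "block s j x \<noteq> vzero" using nonzero_block[OF _ x(2) s] x XV by blast
  have "j \<in> supp b s X" using j x by (auto simp: supp_def)
  then have ne: "supp b s X \<noteq> {}" by blast
  have "supp b s X \<noteq> {0..<b}" using eq nV wall_all by metis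
  moreover have "supp b s X \<subseteq> {0..<b}" by (auto simp: supp_def)
  ultimately show ?thesis using ne eq unfolding is_wall_def by blast
qed

lemma core:
  assumes s: "0 < s"
    and R1: "good_round b s \<rho>1 \<gamma>1 L1" and R2: "good_round b s \<rho>2 \<gamma>2 L2"
    and D: "subspace2 (b * s) D" and B: "subspace2 (b * s) B"
    and d1: "\<forall>d\<in>D. \<forall>v\<in>vecs (b * s). \<rho>1 (d \<oplus> v) \<oplus> \<rho>1 v \<in> B"
    and d2: "\<forall>c\<in>B. \<forall>v\<in>vecs (b * s). \<rho>2 (c \<oplus> v) \<oplus> \<rho>2 v \<in> D"
  shows "(D = {vzero} \<and> B = {vzero}) \<or> (D = vecs (b * s) \<and> B = vecs (b * s))"
proof -
  let ?V = "vecs (b * s)"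
  have DV: "D \<subseteq> ?V" and BV: "B \<subseteq> ?V" using D B by (auto simp: subspace2_def)
  have D0: "vzero \<in> D" using D by (auto simp: subspace2_def)
  have r1: "bij_betw \<rho>1 ?V ?V" "\<rho>1 vzero = vzero" using R1 by (auto simp: good_round_def)
  have r2: "bij_betw \<rho>2 ?V ?V" "\<rho>2 vzero = vzero" using R2 by (auto simp: good_round_def)
  have i1: "inj_on \<rho>1 ?V" and i2: "inj_on \<rho>2 ?V" using r1 r2 by (auto simp: bij_betw_def)
  have im1: "\<rho>1 ` D \<subseteq> B"
  proof
    fix z assume "z \<in> \<rho>1 ` D"
    then obtain d where d: "d \<in> D" "z = \<rho>1 d" by blast
    show "z \<in> B" using d1 d r1(2) by (metis vadd_zero vzero_vecs)
  qed
  have im2: "\<rho>2 ` B \<subseteq> D"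
  proof
    fix z assume "z \<in> \<rho>2 ` B"
    then obtain d where d: "d \<in> B" "z = \<rho>2 d" by blast
    show "z \<in> D" using d2 d r2(2) by (metis vadd_zero vzero_vecs)
  qed
  have finB: "finite B" and finD: "finite D"
    using finite_subset[OF BV finite_vecs] finite_subset[OF DV finite_vecs] by auto
  have cD: "card D = card (\<rho>1 ` D)" using card_image[OF inj_on_subset[OF i1 DV]] by simp
  have cB: "card B = card (\<rho>2 ` B)" using card_image[OF inj_on_subset[OF i2 BV]] by simp
  have "card (\<rho>1 ` D) \<le> card B" using card_mono[OF finB im1] .
  moreover have "card (\<rho>2 ` B) \<le> card D" using card_mono[OF finD im2] .
  ultimately have "card (\<rho>1 ` D) = card B" "card (\<rho>2 ` B) = card D" using cD cB by linarith+
  then have on1: "\<rho>1 ` D = B" and on2: "\<rho>2 ` B = D"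
    using card_subset_eq[OF finB im1] card_subset_eq[OF finD im2] by auto
  show ?thesis
  proof (cases "D = {vzero}")
    case True then show ?thesis using on1 r1(2) by auto
  next
    case nz: False
    show ?thesis
    proof (cases "D = ?V")
      case True
      then have "B = ?V" using on1 r1(1) by (simp add: bij_betw_def)
      then show ?thesis using True by simp
    next
      case nV: False
      obtain d where d: "d \<in> D" "d \<noteq> vzero" using nz D0 by blast
      have "\<rho>1 d \<noteq> vzero" using d i1 r1(2) DV unfolding inj_on_def by (metis subsetD vzero_vecs)
      then have Bnz: "B \<noteq> {vzero}" using on1 d by blast
      have BnV: "B \<noteq> ?V"
      proof
        assume "B = ?V"
        then have "\<rho>1 ` D = \<rho>1 ` ?V" using on1 r1(1) by (simp add: bij_betw_def)
        then show False using inj_on_image_eq_iff[OF i1 DV] nV by simp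
      qed
      have wD: "is_wall b s D" using nontrivial_wall[OF R1 s D B d1 on1 nz nV] .
      have wB: "is_wall b s B" using nontrivial_wall[OF R2 s B D d2 on2 Bnz BnV] .
      obtain I where I: "D = wall b s I" using wD unfolding is_wall_def by blast
      have "L1 ` D = B" using rho_wall[OF R1 s, of I] I on1 by simp
      moreover have "strongly_proper b s L1" using R1 by (simp add: good_round_def)
      ultimately have False using wD wB unfolding strongly_proper_def by blast
      then show ?thesis ..
    qed
  qed
qed



definition stepF :: "nat \<Rightarrow> (vec \<Rightarrow> vec) \<Rightarrow> (vec \<times> vec) set \<Rightarrow> (vec \<times> vec) set \<Rightarrow> bool" where
  "stepF n \<rho> U U' \<longleftrightarrow> (\<forall>w\<in>U'. \<exists>u\<in>U. w = feistel \<rho> u) \<and>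
     (\<forall>u\<in>U. \<forall>v\<in>vecs n \<times> vecs n. padd (feistel \<rho> (padd u v)) (feistel \<rho> v) \<in> U')"

lemma padd_simp[simp]: "padd (a, b) (c, d) = (a \<oplus> c, b \<oplus> d)" by (simp add: padd_def)
lemma padd_zero[simp]: "padd u (vzero, vzero) = u" by (simp add: padd_def)
lemma padd_cancel: "padd (padd a w) (padd c w) = padd a c"
  by (cases a; cases c; cases w) (auto simp: vadd_def fun_eq_iff)
lemma padd_cancel2: "padd (padd a w) w = a"
  by (cases a; cases w) simp
lemma padd_eq_zero: "padd a w = (vzero, vzero) \<Longrightarrow> w = a"
  by (cases a; cases w) (simp add: vadd_eq_zero_iff)
lemma feistel_simp[simp]: "feistel \<rho> (x, y) = (y, x \<oplus> \<rho> y)" by (simp add: feistel_def)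

lemma step_of_part_image:
  assumes U: "subgroup2 n U" and U': "subgroup2 n U'" and r0: "\<rho> vzero = vzero"
    and P: "part_image (linpart n U) (feistel \<rho>) = linpart n U'"
  shows "stepF n \<rho> U U'"
proof -
  let ?F = "feistel \<rho>"
  have U0: "(vzero, vzero) \<in> U" and U'0: "(vzero, vzero) \<in> U'" using U U' by (auto simp: subgroup2_def)
  have U'c: "\<forall>u\<in>U'. \<forall>v\<in>U'. padd u v \<in> U'" using U' by (simp add: subgroup2_def)
  have cos: "\<exists>w. ?F ` ((\<lambda>u. padd u v) ` U) = (\<lambda>u. padd u w) ` U'" if v: "v \<in> vecs n \<times> vecs n" for v
  proof -
    have "(\<lambda>u. padd u v) ` U \<in> linpart n U" using v by (auto simp: linpart_def)
    then have "?F ` ((\<lambda>u. padd u v) ` U) \<in> part_image (linpart n U) ?F" by (auto simp: part_image_def)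
    then have "?F ` ((\<lambda>u. padd u v) ` U) \<in> linpart n U'" using P by simp
    then show ?thesis by (auto simp: linpart_def)
  qed
  have F0: "?F (vzero, vzero) = (vzero, vzero)" using r0 by simp
  have S2: "\<forall>u\<in>U. \<forall>v\<in>vecs n \<times> vecs n. padd (?F (padd u v)) (?F v) \<in> U'"
  proof (intro ballI)
    fix u v assume u: "u \<in> U" and v: "v \<in> vecs n \<times> vecs n"
    obtain w where w: "?F ` ((\<lambda>u. padd u v) ` U) = (\<lambda>u. padd u w) ` U'" using cos[OF v] by blast
    have "?F (padd (vzero, vzero) v) \<in> ?F ` ((\<lambda>u. padd u v) ` U)" using U0 by blast
    moreover have "padd (vzero, vzero) v = v" by (cases v) simp
    ultimately have "?F v \<in> (\<lambda>u. padd u w) ` U'" using w by simp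
    then obtain u1 where u1: "u1 \<in> U'" "?F v = padd u1 w" by blast
    have "?F (padd u v) \<in> (\<lambda>u. padd u w) ` U'" using w u by blast
    then obtain u2 where u2: "u2 \<in> U'" "?F (padd u v) = padd u2 w" by blast
    have "padd (?F (padd u v)) (?F v) = padd u2 u1" using u1 u2 by (simp add: padd_cancel)
    then show "padd (?F (padd u v)) (?F v) \<in> U'" using U'c u1 u2 by simp
  qed
  have S1: "\<forall>w\<in>U'. \<exists>u\<in>U. w = ?F u"
  proof
    fix w assume wU: "w \<in> U'"
    have z: "(vzero, vzero) \<in> vecs n \<times> vecs n" by simp
    obtain w0 where w0: "?F ` ((\<lambda>u. padd u (vzero, vzero)) ` U) = (\<lambda>u. padd u w0) ` U'"
      using cos[OF z] by blast
    have img: "(\<lambda>u. padd u (vzero, vzero)) ` U = U" by simp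
    have "(vzero, vzero) \<in> (\<lambda>u. padd u w0) ` U'" using w0 img U0 F0 by (metis imageI)
    then obtain u0 where u0: "u0 \<in> U'" "padd u0 w0 = (vzero, vzero)" by auto
    have "w0 = u0" using u0(2) by (rule padd_eq_zero)
    then have "padd w w0 \<in> U'" using U'c wU u0 by simp
    then have "padd (padd w w0) w0 \<in> (\<lambda>u. padd u w0) ` U'" by blast
    then have "w \<in> ?F ` U" using w0 img by (simp add: padd_cancel2)
    then show "\<exists>u\<in>U. w = ?F u" by blast
  qed
  show ?thesis using S1 S2 by (simp add: stepF_def)
qed

lemma P1: "stepF n \<rho> U U' \<Longrightarrow> subgroup2 n U \<Longrightarrow> \<rho> vzero = vzero \<Longrightarrow> (x, y) \<in> U \<Longrightarrow> (y, x \<oplus> \<rho> y) \<in> U'"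
proof -
  assume st: "stepF n \<rho> U U'" and U: "subgroup2 n U" and r0: "\<rho> vzero = vzero" and xy: "(x, y) \<in> U"
  have z: "(vzero, vzero) \<in> vecs n \<times> vecs n" by simp
  have "padd (feistel \<rho> (padd (x, y) (vzero, vzero))) (feistel \<rho> (vzero, vzero)) \<in> U'"
    using st xy z unfolding stepF_def by blast
  then show ?thesis using r0 by simp
qed

lemma P2: "stepF n \<rho> U U' \<Longrightarrow> \<rho> vzero = vzero \<Longrightarrow> (vzero, y) \<in> U' \<Longrightarrow> (y, vzero) \<in> U"
proof -
  assume st: "stepF n \<rho> U U'" and r0: "\<rho> vzero = vzero" and y: "(vzero, y) \<in> U'"
  obtain u where u: "u \<in> U" "(vzero, y) = feistel \<rho> u" using st y unfolding stepF_def by blast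
  obtain a c where ac: "u = (a, c)" by (cases u)
  have "c = vzero" "y = a \<oplus> \<rho> c" using u(2) ac by auto
  then show ?thesis using u ac r0 by simp
qed

lemma P2': "stepF n \<rho> U U' \<Longrightarrow> (y, vzero) \<in> U' \<Longrightarrow> \<exists>x. (x, y) \<in> U"
proof -
  assume st: "stepF n \<rho> U U'" and y: "(y, vzero) \<in> U'"
  obtain u where u: "u \<in> U" "(y, vzero) = feistel \<rho> u" using st y unfolding stepF_def by blast
  obtain a c where ac: "u = (a, c)" by (cases u)
  then show ?thesis using u by auto
qed

lemma xor3_zero': "p \<oplus> q \<oplus> r = vzero \<Longrightarrow> p \<oplus> q = r"
  by (auto simp: vadd_def vzero_def fun_eq_iff)

lemma Deriv:
  assumes st: "stepF n \<rho> U U'" and U: "subgroup2 n U" and U': "subgroup2 n U'"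
    and r0: "\<rho> vzero = vzero" and xc: "(x, c) \<in> U" and v: "v \<in> vecs n"
  shows "(\<rho> (c \<oplus> v) \<oplus> \<rho> v \<oplus> \<rho> c, vzero) \<in> U"
proof -
  have v': "(vzero, v) \<in> vecs n \<times> vecs n" using v by simp
  have "padd (feistel \<rho> (padd (x, c) (vzero, v))) (feistel \<rho> (vzero, v)) \<in> U'"
    using st xc v' unfolding stepF_def by blast
  then have a: "(c, x \<oplus> \<rho> (c \<oplus> v) \<oplus> \<rho> v) \<in> U'" by (simp add: vadd_assoc)
  have b: "(c, x \<oplus> \<rho> c) \<in> U'" using P1[OF st U r0 xc] .
  have m: "padd (c, x \<oplus> \<rho> (c \<oplus> v) \<oplus> \<rho> v) (c, x \<oplus> \<rho> c) \<in> U'"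
    using U' a b unfolding subgroup2_def by blast
  have e: "padd (c, x \<oplus> \<rho> (c \<oplus> v) \<oplus> \<rho> v) (c, x \<oplus> \<rho> c) = (vzero, \<rho> (c \<oplus> v) \<oplus> \<rho> v \<oplus> \<rho> c)"
    by (auto simp: vadd_def vzero_def fun_eq_iff)
  show ?thesis using P2[OF st r0 m[unfolded e]] .
qed



definition Bset :: "nat \<Rightarrow> (vec \<times> vec) set \<Rightarrow> vec set" where
  "Bset n U = {y \<in> vecs n. (y, vzero) \<in> U}"

lemma L3:
  assumes s: "0 < s" and R: "good_round b s \<rho> \<gamma> L" and st: "stepF (b * s) \<rho> U U'"
    and U: "subgroup2 (b * s) U" and U': "subgroup2 (b * s) U'"
    and nz: "U \<noteq> {(vzero, vzero)}" and B0: "\<forall>y. (y, vzero) \<in> U \<longrightarrow> y = vzero"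
  shows False
proof -
  let ?V = "vecs (b * s)"
  have r0: "\<rho> vzero = vzero" and rb: "bij_betw \<rho> ?V ?V" using R by (auto simp: good_round_def)
  have rV: "\<And>z. z \<in> ?V \<Longrightarrow> \<rho> z \<in> ?V" using rb by (auto simp: bij_betw_def)
  have U0: "(vzero, vzero) \<in> U" and UV: "U \<subseteq> ?V \<times> ?V" using U by (auto simp: subgroup2_def)
  obtain x c where xc: "(x, c) \<in> U" "(x, c) \<noteq> (vzero, vzero)" using nz U0 by auto
  have cnz: "c \<noteq> vzero" using xc B0 by auto
  have cV: "c \<in> ?V" using xc UV by auto
  have hd: "\<rho> (c \<oplus> v) \<oplus> \<rho> v = \<rho> c" if v: "v \<in> ?V" for v
  proof -
    have "(\<rho> (c \<oplus> v) \<oplus> \<rho> v \<oplus> \<rho> c, vzero) \<in> U" by (rule Deriv[OF st U U' r0 xc(1) v])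
    then have "\<rho> (c \<oplus> v) \<oplus> \<rho> v \<oplus> \<rho> c = vzero" using B0 by blast
    then show ?thesis by (rule xor3_zero')
  qed
  define X where "X = {vzero, c}"
  define Y where "Y = {vzero, \<rho> c}"
  have X: "subspace2 (b * s) X" unfolding X_def subspace2_def using cV by auto
  have Y: "subspace2 (b * s) Y" unfolding Y_def subspace2_def using rV[OF cV] by auto
  have der: "\<forall>u\<in>X. \<forall>v\<in>?V. \<rho> (u \<oplus> v) \<oplus> \<rho> v \<in> Y"
    unfolding X_def Y_def using hd by auto
  have onto: "\<rho> ` X = Y" unfolding X_def Y_def using r0 by simp
  obtain j where j: "j < b" "block s j c \<noteq> vzero" using nonzero_block[OF cV cnz s] by blast
  have all: "\<forall>y\<in>vecs s. emb s j y \<in> X"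
    using key_round[OF R s X Y der onto] j cV unfolding X_def by blast
  obtain \<delta> g where dg: "\<delta> < s" "\<forall>j<b. strongly_anti_invariant s (g j) (\<delta> - 1)"
    using R unfolding good_round_def by blast
  have "1 \<le> \<delta> - 1" using dg(2) j(1) by (auto simp: strongly_anti_invariant_def)
  then have s2: "2 \<le> s" using dg(1) by linarith
  define e0 :: vec where "e0 = (\<lambda>k. k = 0)"
  define e1 :: vec where "e1 = (\<lambda>k. k = Suc 0)"
  have e0s: "e0 \<in> vecs s" and e1s: "e1 \<in> vecs s" using s2 by (auto simp: e0_def e1_def vecs_def)
  have e0nz: "e0 \<noteq> vzero" and e1nz: "e1 \<noteq> vzero" and e01: "e0 \<noteq> e1"
    by (auto simp: e0_def e1_def vzero_def fun_eq_iff)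
  have m0: "emb s j e0 \<in> X" using all e0s by blast
  have m1: "emb s j e1 \<in> X" using all e1s by blast
  have n0: "emb s j e0 \<noteq> vzero" using emb_inj[OF e0s vzero_vecs, of j] e0nz by auto
  have n1: "emb s j e1 \<noteq> vzero" using emb_inj[OF e1s vzero_vecs, of j] e1nz by auto
  have "emb s j e0 = c" "emb s j e1 = c" using m0 m1 n0 n1 by (auto simp: X_def)
  then have "e0 = e1" using emb_inj[OF e0s e1s, of j] by simp
  then show False using e01 by simp
qed

lemma Dset_sub: assumes "subgroup2 n U" shows "subspace2 n (Dset n U)"
proof -
  have c: "\<forall>u\<in>U. \<forall>v\<in>U. padd u v \<in> U" and z: "(vzero, vzero) \<in> U"
    using assms by (auto simp: subgroup2_def)
  have "padd (vzero, x) (vzero, y) \<in> U" if "(vzero, x) \<in> U" "(vzero, y) \<in> U" for x y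
    using c that by blast
  then show ?thesis using z by (auto simp: subspace2_def Dset_def vadd_vecs)
qed

lemma Bset_sub: assumes "subgroup2 n U" shows "subspace2 n (Bset n U)"
proof -
  have c: "\<forall>u\<in>U. \<forall>v\<in>U. padd u v \<in> U" and z: "(vzero, vzero) \<in> U"
    using assms by (auto simp: subgroup2_def)
  have "padd (x, vzero) (y, vzero) \<in> U" if "(x, vzero) \<in> U" "(y, vzero) \<in> U" for x y
    using c that by blast
  then show ?thesis using z by (auto simp: subspace2_def Bset_def vadd_vecs)
qed

lemma finish:
  assumes s: "0 < s"
    and R1: "good_round b s \<rho>1 \<gamma>1 L1" and R2: "good_round b s \<rho>2 \<gamma>2 L2"
    and st: "stepF (b * s) \<rho>1 U U'"
    and U: "subgroup2 (b * s) U" and U': "subgroup2 (b * s) U'"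
    and nz: "U \<noteq> {(vzero, vzero)}" and nV: "U \<noteq> vecs (b * s) \<times> vecs (b * s)"
    and d1: "\<forall>d\<in>Dset (b * s) U. \<forall>v\<in>vecs (b * s). \<rho>1 (d \<oplus> v) \<oplus> \<rho>1 v \<in> Bset (b * s) U"
    and d2: "\<forall>c\<in>Bset (b * s) U. \<forall>v\<in>vecs (b * s). \<rho>2 (c \<oplus> v) \<oplus> \<rho>2 v \<in> Dset (b * s) U"
  shows False
proof -
  have UV: "U \<subseteq> vecs (b * s) \<times> vecs (b * s)" using U by (simp add: subgroup2_def)
  have Uc: "\<forall>u\<in>U. \<forall>v\<in>U. padd u v \<in> U" using U by (simp add: subgroup2_def)
  from core[OF s R1 R2 Dset_sub[OF U] Bset_sub[OF U] d1 d2]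
  consider "Dset (b * s) U = {vzero}" "Bset (b * s) U = {vzero}"
    | "Dset (b * s) U = vecs (b * s)" "Bset (b * s) U = vecs (b * s)" by blast
  then show False
  proof cases
    case 1
    have "\<forall>y. (y, vzero) \<in> U \<longrightarrow> y = vzero"
    proof (intro allI impI)
      fix y assume "(y, vzero) \<in> U"
      then have "y \<in> Bset (b * s) U" using UV by (auto simp: Bset_def)
      then show "y = vzero" using 1 by simp
    qed
    then show False using L3[OF s R1 st U U' nz] by blast
  next
    case 2
    have "vecs (b * s) \<times> vecs (b * s) \<subseteq> U"
    proof
      fix p assume p: "p \<in> vecs (b * s) \<times> vecs (b * s)"
      obtain x y where xy: "p = (x, y)" by (cases p)
      have "(x, vzero) \<in> U" using 2 p xy by (auto simp: Bset_def)
      moreover have "(vzero, y) \<in> U" using 2 p xy by (auto simp: Dset_def)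
      ultimately have "padd (x, vzero) (vzero, y) \<in> U" using Uc by blast
      then show "p \<in> U" using xy by simp
    qed
    then show False using UV nV by blast
  qed
qed



lemma prod_D: "U = A \<times> D \<Longrightarrow> (x, t) \<in> U \<Longrightarrow> t \<in> D" by blast

theorem theorem4p10:
  fixes b s r :: nat
    and \<rho> \<gamma> L :: "nat \<Rightarrow> vec \<Rightarrow> vec"
    and U :: "nat \<Rightarrow> (vec \<times> vec) set"
  assumes "0 < b" and "0 < s" and "2 \<le> r"
    and rho_perm: "\<forall>i\<in>{1..r}. bij_betw (\<rho> i) (vecs (b * s)) (vecs (b * s))"
    and rho_zero: "\<forall>i\<in>{1..r}. \<rho> i vzero = vzero"
    and rho_comp: "\<forall>i\<in>{1..r}. \<forall>x\<in>vecs (b * s). \<rho> i x = L i (\<gamma> i x)"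
    and gamma_par: "\<forall>i\<in>{1..r}. \<exists>\<delta> g. \<delta> < s \<and> parallel_with b s g (\<gamma> i) \<and>
        (\<forall>j<b. diff_uniform s (g j) (2 ^ \<delta>) \<and> strongly_anti_invariant s (g j) (\<delta> - 1))"
    and lambda_sp: "\<forall>i\<in>{1..r}. strongly_proper b s (L i)"
    and U_sub: "\<forall>i\<in>{1..r+1}. proper_nontrivial_subgroup2 (b * s) (U i)"
    and U_nt: "\<forall>i\<in>{1..r+1}. nontrivial_partition (b * s) (linpart (b * s) (U i))"
    and U_trail: "\<forall>i\<in>{1..r}. part_image (linpart (b * s) (U i)) (feistel (\<rho> i))
                              = linpart (b * s) (U (i + 1))"
  shows "\<not> ((\<exists>i\<in>{1..r-1}. part_image (linpart (b * s) (U (i + 1))) (feistel (\<rho> (i + 1)))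
                              = linpart (b * s) (U i))
          \<or> (\<exists>i\<in>{1..r-1}. \<forall>k\<in>{i, i + 1, i + 2}.
                U k = Aset (b * s) (U k) \<times> Dset (b * s) (U k))
          \<or> (\<exists>i\<in>{1..r}. Dset (b * s) (U i) = {vzero} \<and> Dset (b * s) (U (i + 1)) = {vzero})
          \<or> (\<exists>i\<in>{1..r}. Aset (b * s) (U i) = {vzero} \<and> Aset (b * s) (U (i + 1)) = {vzero}))"
proof -
  let ?n = "b * s"
  let ?V = "vecs (b * s)"
  have s: "0 < s" by fact
  have good: "good_round b s (\<rho> i) (\<gamma> i) (L i)" if "i \<in> {1..r}" for i
    using that rho_perm rho_zero rho_comp gamma_par lambda_sp unfolding good_round_def by blast
  have r0: "\<rho> i vzero = vzero" if "i \<in> {1..r}" for i using that rho_zero by blast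
  have rV: "\<rho> i z \<in> ?V" if "i \<in> {1..r}" "z \<in> ?V" for i z
  proof -
    have "bij_betw (\<rho> i) ?V ?V" using that rho_perm by blast
    then show ?thesis using that(2) unfolding bij_betw_def by blast
  qed
  have sg: "subgroup2 ?n (U i)" and nz: "U i \<noteq> {(vzero, vzero)}" and nV: "U i \<noteq> ?V \<times> ?V"
    if "i \<in> {1..r+1}" for i
    using that U_sub by (auto simp: proper_nontrivial_subgroup2_def)
  have UV: "U i \<subseteq> ?V \<times> ?V" if "i \<in> {1..r+1}" for i
    using sg[OF that] by (simp add: subgroup2_def)
  have Uc: "\<forall>u\<in>U i. \<forall>v\<in>U i. padd u v \<in> U i" if "i \<in> {1..r+1}" for i
    using sg[OF that] by (simp add: subgroup2_def)
  have st: "stepF ?n (\<rho> i) (U i) (U (i + 1))" if i: "i \<in> {1..r}" for i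
  proof -
    have a: "i \<in> {1..r+1}" and b: "i + 1 \<in> {1..r+1}" using i by auto
    have "part_image (linpart ?n (U i)) (feistel (\<rho> i)) = linpart ?n (U (i + 1))" using U_trail i by blast
    then show ?thesis using step_of_part_image[where \<rho>="\<rho> i", OF sg[OF a] sg[OF b] r0[OF i]] by blast
  qed
  have not4: "\<not> (\<exists>i\<in>{1..r}. Aset ?n (U i) = {vzero} \<and> Aset ?n (U (i + 1)) = {vzero})"
  proof
    assume "\<exists>i\<in>{1..r}. Aset ?n (U i) = {vzero} \<and> Aset ?n (U (i + 1)) = {vzero}"
    then obtain i where i: "i \<in> {1..r}" "Aset ?n (U i) = {vzero}" "Aset ?n (U (i + 1)) = {vzero}" by blast
    have i1: "i \<in> {1..r+1}" and i2: "i + 1 \<in> {1..r+1}" using i by auto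
    have U0: "(vzero, vzero) \<in> U i" using sg[OF i1] by (simp add: subgroup2_def)
    obtain x c where xc: "(x, c) \<in> U i" "(x, c) \<noteq> (vzero, vzero)" using nz[OF i1] U0 by auto
    have xcV: "x \<in> ?V" "c \<in> ?V" using xc UV[OF i1] by auto
    have "x \<in> Aset ?n (U i)" using xc xcV by (auto simp: Aset_def)
    then have x0: "x = vzero" using i by simp
    have "(c, x \<oplus> \<rho> i c) \<in> U (i + 1)" using P1[OF st[OF i(1)] sg[OF i1] r0[OF i(1)] xc(1)] .
    then have "c \<in> Aset ?n (U (i + 1))" using UV[OF i2] by (auto simp: Aset_def)
    then have "c = vzero" using i by simp
    then show False using x0 xc by simp
  qed
  have B0of: "\<forall>y. (y, vzero) \<in> U i \<longrightarrow> y = vzero"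
    if i: "i \<in> {1..r}" and D: "Dset ?n (U (i + 1)) = {vzero}" for i
  proof (intro allI impI)
    fix y assume y: "(y, vzero) \<in> U i"
    have i1: "i \<in> {1..r+1}" and i2: "i + 1 \<in> {1..r+1}" using i by auto
    have "(vzero, y \<oplus> \<rho> i vzero) \<in> U (i + 1)" using P1[OF st[OF i] sg[OF i1] r0[OF i] y] .
    then have "(vzero, y) \<in> U (i + 1)" using r0[OF i] by simp
    then have "y \<in> Dset ?n (U (i + 1))" using UV[OF i2] by (auto simp: Dset_def)
    then show "y = vzero" using D by simp
  qed
  have not3: "\<not> (\<exists>i\<in>{1..r}. Dset ?n (U i) = {vzero} \<and> Dset ?n (U (i + 1)) = {vzero})"
  proof
    assume "\<exists>i\<in>{1..r}. Dset ?n (U i) = {vzero} \<and> Dset ?n (U (i + 1)) = {vzero}"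
    then obtain i where i: "i \<in> {1..r}" "Dset ?n (U (i + 1)) = {vzero}" by blast
    have i1: "i \<in> {1..r+1}" and i2: "i + 1 \<in> {1..r+1}" using i by auto
    show False using L3[OF s good[OF i(1)] st[OF i(1)] sg[OF i1] sg[OF i2] nz[OF i1] B0of[OF i]] .
  qed
  have not1: "\<not> (\<exists>i\<in>{1..r-1}. part_image (linpart ?n (U (i + 1))) (feistel (\<rho> (i + 1)))
                              = linpart ?n (U i))"
  proof
    assume "\<exists>i\<in>{1..r-1}. part_image (linpart ?n (U (i + 1))) (feistel (\<rho> (i + 1))) = linpart ?n (U i)"
    then obtain i where i: "i \<in> {1..r-1}"
      and P: "part_image (linpart ?n (U (i + 1))) (feistel (\<rho> (i + 1))) = linpart ?n (U i)" by blast
    have ir: "i \<in> {1..r}" and ir': "i + 1 \<in> {1..r}" and i1: "i \<in> {1..r+1}" and i2: "i + 1 \<in> {1..r+1}"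
      using i by auto
    let ?U = "U i" and ?U' = "U (i + 1)" and ?r = "\<rho> i" and ?q = "\<rho> (i + 1)"
    have st1: "stepF ?n ?r ?U ?U'" using st[OF ir] .
    have st2: "stepF ?n ?q ?U' ?U" using step_of_part_image[where \<rho>="\<rho> (i + 1)", OF sg[OF i2] sg[OF i1] r0[OF ir'] P] .
    have d1: "\<forall>d\<in>Dset ?n ?U. \<forall>v\<in>?V. ?r (d \<oplus> v) \<oplus> ?r v \<in> Bset ?n ?U"
    proof (intro ballI)
      fix d v assume d: "d \<in> Dset ?n ?U" and v: "v \<in> ?V"
      have d0: "(vzero, d) \<in> ?U" and dV: "d \<in> ?V" using d by (auto simp: Dset_def)
      have a: "(?r (d \<oplus> v) \<oplus> ?r v \<oplus> ?r d, vzero) \<in> ?U"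
        using Deriv[OF st1 sg[OF i1] sg[OF i2] r0[OF ir] d0 v] .
      have "(d, vzero) \<in> ?U'" using P2[OF st2 r0[OF ir'] d0] .
      moreover have "(d, vzero \<oplus> ?r d) \<in> ?U'" using P1[OF st1 sg[OF i1] r0[OF ir] d0] .
      ultimately have "padd (d, vzero) (d, vzero \<oplus> ?r d) \<in> ?U'" using Uc[OF i2] by blast
      then have "(vzero, ?r d) \<in> ?U'" by simp
      then have b: "(?r d, vzero) \<in> ?U" using P2[OF st1 r0[OF ir]] by blast
      have "padd (?r (d \<oplus> v) \<oplus> ?r v \<oplus> ?r d, vzero) (?r d, vzero) \<in> ?U" using Uc[OF i1] a b by blast
      then have "(?r (d \<oplus> v) \<oplus> ?r v, vzero) \<in> ?U" by simp
      moreover have "?r (d \<oplus> v) \<oplus> ?r v \<in> ?V"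
        using rV[OF ir] dV v by (simp add: vadd_vecs)
      ultimately show "?r (d \<oplus> v) \<oplus> ?r v \<in> Bset ?n ?U" by (simp add: Bset_def)
    qed
    have d2: "\<forall>c\<in>Bset ?n ?U. \<forall>v\<in>?V. ?q (c \<oplus> v) \<oplus> ?q v \<in> Dset ?n ?U"
    proof (intro ballI)
      fix c v assume c: "c \<in> Bset ?n ?U" and v: "v \<in> ?V"
      have c0: "(c, vzero) \<in> ?U" and cV: "c \<in> ?V" using c by (auto simp: Bset_def)
      have "(vzero, c \<oplus> ?r vzero) \<in> ?U'" using P1[OF st1 sg[OF i1] r0[OF ir] c0] .
      then have c0': "(vzero, c) \<in> ?U'" using r0[OF ir] by simp
      have "(?q (c \<oplus> v) \<oplus> ?q v \<oplus> ?q c, vzero) \<in> ?U'"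
        using Deriv[OF st2 sg[OF i2] sg[OF i1] r0[OF ir'] c0' v] .
      then have "(vzero, (?q (c \<oplus> v) \<oplus> ?q v \<oplus> ?q c) \<oplus> ?q vzero) \<in> ?U"
        using P1[OF st2 sg[OF i2] r0[OF ir']] by blast
      then have a: "(vzero, ?q (c \<oplus> v) \<oplus> ?q v \<oplus> ?q c) \<in> ?U" using r0[OF ir'] by simp
      have "(c, vzero \<oplus> ?q c) \<in> ?U" using P1[OF st2 sg[OF i2] r0[OF ir'] c0'] .
      then have "padd (c, vzero) (c, vzero \<oplus> ?q c) \<in> ?U" using Uc[OF i1] c0 by blast
      then have b: "(vzero, ?q c) \<in> ?U" by simp
      have "padd (vzero, ?q (c \<oplus> v) \<oplus> ?q v \<oplus> ?q c) (vzero, ?q c) \<in> ?U" using Uc[OF i1] a b by blast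
      then have "(vzero, ?q (c \<oplus> v) \<oplus> ?q v) \<in> ?U" by simp
      moreover have "?q (c \<oplus> v) \<oplus> ?q v \<in> ?V"
        using rV[OF ir'] cV v by (simp add: vadd_vecs)
      ultimately show "?q (c \<oplus> v) \<oplus> ?q v \<in> Dset ?n ?U" by (simp add: Dset_def)
    qed
    show False using finish[OF s good[OF ir] good[OF ir'] st1 sg[OF i1] sg[OF i2] nz[OF i1] nV[OF i1] d1 d2] .
  qed
  have not2: "\<not> (\<exists>i\<in>{1..r-1}. \<forall>k\<in>{i, i + 1, i + 2}. U k = Aset ?n (U k) \<times> Dset ?n (U k))"
  proof
    assume "\<exists>i\<in>{1..r-1}. \<forall>k\<in>{i, i + 1, i + 2}. U k = Aset ?n (U k) \<times> Dset ?n (U k)"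
    then obtain i where i: "i \<in> {1..r-1}"
      and pr: "\<forall>k\<in>{i, i + 1, i + 2}. U k = Aset ?n (U k) \<times> Dset ?n (U k)" by blast
    have ir: "i \<in> {1..r}" and ir': "i + 1 \<in> {1..r}" and i1: "i \<in> {1..r+1}" and i2: "i + 1 \<in> {1..r+1}"
      and i3: "i + 1 + 1 \<in> {1..r+1}"
      using i by auto
    have p1: "U i = Aset ?n (U i) \<times> Dset ?n (U i)" using pr by blast
    have p2: "U (i + 1) = Aset ?n (U (i + 1)) \<times> Dset ?n (U (i + 1))" using pr by blast
    have p3: "U (i + 1 + 1) = Aset ?n (U (i + 1 + 1)) \<times> Dset ?n (U (i + 1 + 1))"
      using pr by (simp add: add.assoc)
    let ?U = "U i" and ?U' = "U (i + 1)" and ?U'' = "U (i + 1 + 1)" and ?r = "\<rho> i" and ?q = "\<rho> (i + 1)"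
    have st1: "stepF ?n ?r ?U ?U'" using st[OF ir] .
    have st2: "stepF ?n ?q ?U' ?U''" using st[OF ir'] .
    have toD: "t \<in> Dset ?n ?U" if h: "(t, vzero) \<in> ?U'" for t
    proof -
      obtain x where "(x, t) \<in> ?U" using P2'[OF st1 h] by blast
      then show ?thesis using prod_D[OF p1] by blast
    qed
    have d1: "\<forall>d\<in>Dset ?n ?U. \<forall>v\<in>?V. ?r (d \<oplus> v) \<oplus> ?r v \<in> Bset ?n ?U"
    proof (intro ballI)
      fix d v assume d: "d \<in> Dset ?n ?U" and v: "v \<in> ?V"
      have d0: "(vzero, d) \<in> ?U" and dV: "d \<in> ?V" using d by (auto simp: Dset_def)
      have a: "(?r (d \<oplus> v) \<oplus> ?r v \<oplus> ?r d, vzero) \<in> ?U"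
        using Deriv[OF st1 sg[OF i1] sg[OF i2] r0[OF ir] d0 v] .
      have "(d, vzero \<oplus> ?r d) \<in> ?U'" using P1[OF st1 sg[OF i1] r0[OF ir] d0] .
      then have "vzero \<oplus> ?r d \<in> Dset ?n ?U'" using prod_D[OF p2] by blast
      then have "(vzero, ?r d) \<in> ?U'" by (simp add: Dset_def)
      then have b: "(?r d, vzero) \<in> ?U" using P2[OF st1 r0[OF ir]] by blast
      have "padd (?r (d \<oplus> v) \<oplus> ?r v \<oplus> ?r d, vzero) (?r d, vzero) \<in> ?U" using Uc[OF i1] a b by blast
      then have "(?r (d \<oplus> v) \<oplus> ?r v, vzero) \<in> ?U" by simp
      moreover have "?r (d \<oplus> v) \<oplus> ?r v \<in> ?V"
        using rV[OF ir] dV v by (simp add: vadd_vecs)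
      ultimately show "?r (d \<oplus> v) \<oplus> ?r v \<in> Bset ?n ?U" by (simp add: Bset_def)
    qed
    have d2: "\<forall>c\<in>Bset ?n ?U. \<forall>v\<in>?V. ?q (c \<oplus> v) \<oplus> ?q v \<in> Dset ?n ?U"
    proof (intro ballI)
      fix c v assume c: "c \<in> Bset ?n ?U" and v: "v \<in> ?V"
      have c0: "(c, vzero) \<in> ?U" and cV: "c \<in> ?V" using c by (auto simp: Bset_def)
      have "(vzero, c \<oplus> ?r vzero) \<in> ?U'" using P1[OF st1 sg[OF i1] r0[OF ir] c0] .
      then have c0': "(vzero, c) \<in> ?U'" using r0[OF ir] by simp
      have "(?q (c \<oplus> v) \<oplus> ?q v \<oplus> ?q c, vzero) \<in> ?U'"
        using Deriv[OF st2 sg[OF i2] sg[OF i3] r0[OF ir'] c0' v] .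
      then have a: "?q (c \<oplus> v) \<oplus> ?q v \<oplus> ?q c \<in> Dset ?n ?U" by (rule toD)
      have "(c, vzero \<oplus> ?q c) \<in> ?U''" using P1[OF st2 sg[OF i2] r0[OF ir'] c0'] .
      then have "vzero \<oplus> ?q c \<in> Dset ?n ?U''" using prod_D[OF p3] by blast
      then have "(vzero, ?q c) \<in> ?U''" by (simp add: Dset_def)
      then have "(?q c, vzero) \<in> ?U'" using P2[OF st2 r0[OF ir']] by blast
      then have b: "?q c \<in> Dset ?n ?U" by (rule toD)
      have "(?q (c \<oplus> v) \<oplus> ?q v \<oplus> ?q c) \<oplus> ?q c \<in> Dset ?n ?U"
        using Dset_sub[OF sg[OF i1]] a b unfolding subspace2_def by blast
      then show "?q (c \<oplus> v) \<oplus> ?q v \<in> Dset ?n ?U" by simp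
    qed
    show False using finish[OF s good[OF ir] good[OF ir'] st1 sg[OF i1] sg[OF i2] nz[OF i1] nV[OF i1] d1 d2] .
  qed
  show ?thesis using not1 not2 not3 not4 by blast
qed


end
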